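(* Let $w$ be a non-periodic $\mathcal{A}$-strict standard episturmian word on an alphabet $\mathcal{A}$ with $\delta(w)<\sqrt3$. Then $\mathcal{A}$ contains exactly two letters, and $w$ is a characteristic Sturmian word.
   Context: For a finite word $u$, $u^{(+)}$ denotes its right palindromic closure, the shortest palindrome having $u$ as a prefix. Given an infinite word $\Delta=\delta_1\delta_2\cdots$ on $\mathcal{A}$, the standard episturmian word with directive word $\Delta$ is the limit of the words $\pi_1=\varepsilon$, $\pi_{i+1}=(\pi_i\delta_i)^{(+)}$; it is $\mathcal{A}$-strict if every letter of $\mathcal{A}$ occurs infinitely many times in $\Delta$. For an infinite word $w$ with infinitely many palindromic prefixes (the empty word counting as one), $(n_i)_{i\ge1}$ is the increasing sequence of their lengths and $\delta(w)=\limsup n_{i+1}/n_i$. Characteristic Sturmian word on $\{a,b\}$ ($a\ne b$): for positive integers $s_1,s_2,\dots$, let $\sigma_0=a$, $\sigma_1=a^{s_1-1}b$, $\sigma_n=\sigma_{n-1}^{s_n}\sigma_{n-2}$ ($n\ge2$); the limit of the $\sigma_n$ is the characteristic Sturmian word of slope $[0;s_1,s_2,\dots]$. *)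

theory Defs
  imports Complex_Main "HOL-Library.Extended_Real" "HOL-Library.Infinite_Set" "HOL-Library.Sublist"
begin

(* Infinite words are functions nat => 'a (positions counted from 0);
   finite words are lists. *)

definition is_pal :: "'a list \<Rightarrow> bool" where
  "is_pal u \<longleftrightarrow> rev u = u"

definition rclos :: "'a list \<Rightarrow> 'a list" where
  "rclos u = (SOME p. prefix u p \<and> is_pal p \<and>
       (\<forall>q. prefix u q \<and> is_pal q \<longrightarrow> length p \<le> length q))"

(* pi_{i+1} in the paper is pis D i here: pis D 0 = epsilon = pi_1,
   pis D (Suc i) = (pis D i @ [D i])^(+), where D i = delta_{i+1} *)
primrec pis :: "(nat \<Rightarrow> 'a) \<Rightarrow> nat \<Rightarrow> 'a list" where
  "pis D 0 = []"
| "pis D (Suc i) = rclos (pis D i @ [D i])"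

definition iprefix :: "'a list \<Rightarrow> (nat \<Rightarrow> 'a) \<Rightarrow> bool" where
  "iprefix u w \<longleftrightarrow> (\<forall>j < length u. w j = u ! j)"

definition std_epi_dir :: "(nat \<Rightarrow> 'a) \<Rightarrow> (nat \<Rightarrow> 'a) \<Rightarrow> bool" where
  "std_epi_dir D w \<longleftrightarrow> (\<forall>i. iprefix (pis D i) w)"

definition strict_std_epi :: "'a set \<Rightarrow> (nat \<Rightarrow> 'a) \<Rightarrow> bool" where
  "strict_std_epi A w \<longleftrightarrow> (\<exists>D. (\<forall>n. D n \<in> A) \<and> (\<forall>a\<in>A. \<exists>\<^sub>\<infinity>n. D n = a) \<and> std_epi_dir D w)"

definition periodic_word :: "(nat \<Rightarrow> 'a) \<Rightarrow> bool" where
  "periodic_word w \<longleftrightarrow> (\<exists>p>0. \<forall>n. w (n + p) = w n)"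

definition pal_prefix_lengths :: "(nat \<Rightarrow> 'a) \<Rightarrow> nat set" where
  "pal_prefix_lengths w = {n. is_pal (map w [0..<n])}"

(* n_{i+1} of the paper is pal_len w i *)
definition pal_len :: "(nat \<Rightarrow> 'a) \<Rightarrow> nat \<Rightarrow> nat" where
  "pal_len w = enumerate (pal_prefix_lengths w)"

definition delta_pal :: "(nat \<Rightarrow> 'a) \<Rightarrow> ereal" where
  "delta_pal w = limsup (\<lambda>i. ereal (real (pal_len w (Suc i)) / real (pal_len w i)))"

(* sigma_n for the characteristic Sturmian word; s 1, s 2, ... are the s_i *)
fun sigma :: "'a \<Rightarrow> 'a \<Rightarrow> (nat \<Rightarrow> nat) \<Rightarrow> nat \<Rightarrow> 'a list" where
  "sigma a b s 0 = [a]"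
| "sigma a b s (Suc 0) = replicate (s 1 - 1) a @ [b]"
| "sigma a b s (Suc (Suc n)) =
     concat (replicate (s (Suc (Suc n))) (sigma a b s (Suc n))) @ sigma a b s n"

definition char_sturmian :: "'a \<Rightarrow> 'a \<Rightarrow> (nat \<Rightarrow> 'a) \<Rightarrow> bool" where
  "char_sturmian a b w \<longleftrightarrow> a \<noteq> b \<and>
     (\<exists>s. (\<forall>i\<ge>1. s i \<ge> 1) \<and> (\<forall>n\<ge>1. iprefix (sigma a b s n) w))"

end

theory Submission
  imports Defs
begin



lemma is_pal_rev: "is_pal p \<Longrightarrow> rev p = p" by (simp add: is_pal_def)

lemma rclos_spec:
  "prefix u (rclos u) \<and> is_pal (rclos u) \<and>
   (\<forall>q. prefix u q \<and> is_pal q \<longrightarrow> length (rclos u) \<le> length q)"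
proof -
  define L where "L = (LEAST l. \<exists>p. prefix u p \<and> is_pal p \<and> length p = l)"
  have ex0: "\<exists>p. prefix u p \<and> is_pal p \<and> length p = length (u @ rev u)"
    by (rule exI[of _ "u @ rev u"]) (auto simp: is_pal_def)
  then have "\<exists>l. \<exists>p. prefix u p \<and> is_pal p \<and> length p = l" by blast
  then have "\<exists>p. prefix u p \<and> is_pal p \<and> length p = L"
    unfolding L_def by (rule LeastI_ex)
  then obtain p where p: "prefix u p" "is_pal p" "length p = L" by blast
  have "\<forall>q. prefix u q \<and> is_pal q \<longrightarrow> length p \<le> length q"
    using p(3) unfolding L_def by (auto intro: Least_le)
  with p have "\<exists>p. prefix u p \<and> is_pal p \<and> (\<forall>q. prefix u q \<and> is_pal q \<longrightarrow> length p \<le> length q)"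
    by blast
  then show ?thesis unfolding rclos_def by (rule someI_ex)
qed

lemma rclos_prefix: "prefix u (rclos u)" using rclos_spec by blast
lemma rclos_pal: "is_pal (rclos u)" using rclos_spec by blast
lemma rclos_min: "prefix u q \<Longrightarrow> is_pal q \<Longrightarrow> length (rclos u) \<le> length q"
  using rclos_spec by blast

lemma rclos_le_suffix:
  assumes "suffix s u" "is_pal s"
  shows "length (rclos u) + length s \<le> 2 * length u"
proof -
  obtain x where u: "u = x @ s" using assms(1) by (auto simp: suffix_def)
  have "is_pal (x @ s @ rev x)" using assms(2) by (simp add: is_pal_def)
  moreover have "prefix u (x @ s @ rev x)" using u by simp
  ultimately have "length (rclos u) \<le> length (x @ s @ rev x)" by (metis rclos_min)
  then show ?thesis using u by simp
qed

lemma pal_nth: "is_pal p \<Longrightarrow> i < length p \<Longrightarrow> p ! i = p ! (length p - Suc i)"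
  by (metis is_pal_def rev_nth)

lemma pal_prefix_suffix:
  assumes "prefix u p" "is_pal p" "length p \<le> 2 * length u"
  shows "is_pal (drop (length p - length u) u)"
proof -
  define m where "m = length p - length u"
  define s where "s = drop m u"
  have lu: "length u \<le> length p" using assms(1) by (simp add: prefix_length_le)
  have pu: "\<And>j. j < length u \<Longrightarrow> p ! j = u ! j"
    using assms(1) by (metis prefix_def nth_append)
  have ls: "length s = length u - m" by (simp add: s_def)
  have "rev s = s"
  proof (rule nth_equalityI)
    show "length (rev s) = length s" by simp
    fix i assume i: "i < length (rev s)"
    then have i': "i < length u - m" using ls by simp
    have "rev s ! i = s ! (length s - Suc i)" using i by (simp add: rev_nth)
    also have "\<dots> = u ! (m + (length s - Suc i))" using i' ls by (simp add: s_def)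
    also have "m + (length s - Suc i) = length u - Suc i" using i' ls m_def lu assms(3) by simp
    finally have 1: "rev s ! i = u ! (length u - Suc i)" .
    have "s ! i = u ! (m + i)" using i' by (simp add: s_def)
    also have "\<dots> = p ! (m + i)" using i' by (simp add: pu)
    also have "\<dots> = p ! (length p - Suc (m + i))" using i' lu m_def by (intro pal_nth assms(2)) simp
    also have "length p - Suc (m + i) = length u - Suc i" using i' lu m_def by simp
    also have "p ! (length u - Suc i) = u ! (length u - Suc i)" using i' by (intro pu) simp
    finally show "rev s ! i = s ! i" using 1 by simp
  qed
  then show ?thesis by (simp add: is_pal_def s_def m_def)
qed




lemma bracket:
  assumes "strict_mono (f::nat\<Rightarrow>nat)" "f 0 = 0"
  shows "\<exists>t. f t \<le> m \<and> m < f (Suc t)"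
proof (induction m)
  case 0 then show ?case using assms by (metis le_refl strict_mono_def lessI)
next
  case (Suc m)
  then obtain t where t: "f t \<le> m" "m < f (Suc t)" by blast
  show ?case
  proof (cases "Suc m < f (Suc t)")
    case True with t show ?thesis by (intro exI[of _ t]) simp
  next
    case False
    then have "Suc m = f (Suc t)" using t by simp
    moreover have "f (Suc t) < f (Suc (Suc t))" using assms(1) by (simp add: strict_mono_def)
    ultimately show ?thesis by (intro exI[of _ "Suc t"]) simp
  qed
qed

lemma prefix_map_upt: "prefix u (map w [0..<N]) \<Longrightarrow> u = map w [0..<length u]"
proof -
  assume "prefix u (map w [0..<N])"
  then obtain zs where z: "map w [0..<N] = u @ zs" by (auto simp: prefix_def)
  then have l: "length u \<le> N" by (metis length_append length_map length_upt le_add1 diff_zero)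
  have "u = take (length u) (map w [0..<N])" using z by simp
  also have "\<dots> = map w [0..<length u]" using l by (simp add: take_map)
  finally show ?thesis .
qed

lemma prefix_map_le: "a \<le> b \<Longrightarrow> prefix (map w [0..<a]) (map w [0..<b])"
proof -
  assume "a \<le> b"
  then have "[0..<b] = [0..<a] @ [a..<b]" by (metis le0 upt_add_eq_append le_add_diff_inverse)
  then show ?thesis by (simp add: prefix_def) 
qed

locale epi =
  fixes D :: "nat \<Rightarrow> 'a" and w :: "nat \<Rightarrow> 'a"
  assumes std: "std_epi_dir D w"
begin

abbreviation nn :: "nat \<Rightarrow> nat" where "nn j \<equiv> length (pis D j)"

lemma pis_pal: "is_pal (pis D j)"
  by (cases j) (auto simp: is_pal_def intro: rclos_pal[unfolded is_pal_def])

lemma pis_step_prefix: "prefix (pis D j @ [D j]) (pis D (Suc j))"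
  by (simp add: rclos_prefix)

lemma pis_map: "pis D j = map w [0..<nn j]"
proof -
  have "iprefix (pis D j) w" using std by (simp add: std_epi_dir_def)
  then show ?thesis by (intro nth_equalityI) (auto simp: iprefix_def)
qed

lemma prefix_w: "prefix u (pis D j) \<Longrightarrow> u = map w [0..<length u]"
  using pis_map[of j] prefix_map_upt by metis

lemma nn_step: "nn j < nn (Suc j)"
  using prefix_length_le[OF pis_step_prefix[of j]] by simp

lemma nn_mono: "strict_mono nn"
  unfolding strict_mono_Suc_iff by (rule allI, rule nn_step)

lemma nn_0: "nn 0 = 0" by simp

lemma nn_ge: "j \<le> nn j"
  using nn_mono by (rule strict_mono_imp_increasing)

lemma w_at: "w (nn j) = D j"
proof -
  have "pis D j @ [D j] = map w [0..<Suc (nn j)]"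
    using prefix_w[OF pis_step_prefix[of j]] by simp
  then have "(map w [0..<Suc (nn j)]) ! nn j = D j" by (metis nth_append_length)
  then show ?thesis by (simp del: upt_Suc)
qed

lemma pal_prefix_is_pis:
  assumes "is_pal (map w [0..<m])"
  shows "\<exists>t. m = nn t"
proof -
  obtain t where t: "nn t \<le> m" "m < nn (Suc t)" using bracket[OF nn_mono nn_0] by blast
  show ?thesis
  proof (cases "m = nn t")
    case False
    then have m: "Suc (nn t) \<le> m" using t by simp
    have "pis D t @ [D t] = map w [0..<Suc (nn t)]"
      using prefix_w[OF pis_step_prefix[of t]] by simp
    also have "prefix \<dots> (map w [0..<m])" using m by (rule prefix_map_le)
    finally have "length (pis D (Suc t)) \<le> m"
      using assms by (metis pis.simps(2) rclos_min length_map length_upt diff_zero)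
    then show ?thesis using t by simp
  qed blast
qed

end



context epi begin

lemma palsuf:
  assumes "suffix s (pis D j @ [D j])" "is_pal s" "2 \<le> length s"
  shows "\<exists>t<j. D t = D j \<and> length s = nn t + 2"
proof -
  obtain x where x: "pis D j @ [D j] = x @ s" using assms(1) by (auto simp: suffix_def)
  have sne: "s \<noteq> []" using assms(3) by auto
  have ls: "last s = D j" using x sne by (metis last_appendR last_snoc)
  have hs: "hd s = D j" using assms(2) sne ls by (metis is_pal_def hd_rev)
  define q where "q = butlast (tl s)"
  have tne: "tl s \<noteq> []" using assms(3) by (cases s) auto
  have sq: "s = [D j] @ q @ [D j]"
  proof -
    have "s = hd s # tl s" using sne by simp
    also have "tl s = butlast (tl s) @ [last (tl s)]" using tne by simp
    also have "last (tl s) = last s" using tne sne by (metis last_tl)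
    finally show ?thesis using hs ls q_def by simp
  qed
  have qp: "rev q = q" using assms(2) sq unfolding is_pal_def
    by (metis rev_append rev_singleton_conv append_same_eq append.assoc append_Cons append_Nil same_append_eq list.inject)
  have pj: "pis D j = x @ [D j] @ q" using x sq by simp
  have "pis D j = rev (pis D j)" using pis_pal[of j] by (simp add: is_pal_def)
  also have "\<dots> = q @ [D j] @ rev x" using pj qp by simp
  finally have "prefix (q @ [D j]) (pis D j)" by (metis append.assoc prefixI)
  then have m: "q @ [D j] = map w [0..<Suc (length q)]" using prefix_w by fastforce
  then have "q = map w [0..<length q] \<and> D j = w (length q)" by simp
  then have mq: "map w [0..<length q] = q" and wq: "w (length q) = D j" by auto
  have "is_pal (map w [0..<length q])" using mq qp by (simp add: is_pal_def)
  then obtain t where t: "length q = nn t" using pal_prefix_is_pis by blast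
  have "D t = D j" using wq t w_at by metis
  moreover have "nn t < nn j" using t pj by simp
  then have "t < j" using nn_mono by (metis strict_mono_less)
  ultimately show ?thesis using sq t by auto
qed

end



context epi begin

lemma pis_prefix_mono: "a \<le> b \<Longrightarrow> prefix (pis D a) (pis D b)"
  by (metis pis_map prefix_map_le nn_mono strict_mono_less_eq)

lemma rec_low: "2 * nn j + 1 \<le> nn (Suc j) \<or> (\<exists>t'<j. D t' = D j \<and> nn (Suc j) + nn t' = 2 * nn j)"
proof -
  define u where "u = pis D j @ [D j]"
  define p where "p = pis D (Suc j)"
  have pu: "prefix u p" "is_pal p" unfolding u_def p_def by (rule pis_step_prefix, rule pis_pal)
  have lu: "length u \<le> length p" using pu(1) by (simp add: prefix_length_le)
  show ?thesis
  proof (cases "length p \<le> 2 * length u")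
    case False then show ?thesis using u_def p_def by simp
  next
    case True
    define s where "s = drop (length p - length u) u"
    have sp: "is_pal s" using pal_prefix_suffix[OF pu True] s_def by simp
    have ss: "suffix s u" by (simp add: s_def suffix_drop)
    have ls: "length s + length p = 2 * length u" using True lu s_def by simp
    show ?thesis
    proof (cases "2 \<le> length s")
      case True
      then obtain t' where "t' < j" "D t' = D j" "length s = nn t' + 2"
        using palsuf ss sp u_def by blast
      then show ?thesis using ls u_def p_def by auto
    next
      case False then show ?thesis using ls u_def p_def by simp
    qed
  qed
qed

lemma rec_old:
  assumes "t < j" "D t = D j" "\<forall>s. t < s \<and> s < j \<longrightarrow> D s \<noteq> D j"
  shows "nn (Suc j) + nn t = 2 * nn j"
proof -
  have "prefix (pis D t @ [D t]) (pis D j)"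
    using pis_step_prefix[of t] pis_prefix_mono[of "Suc t" j] assms(1)
    by (metis Suc_leI prefix_order.trans)
  then obtain z where z: "pis D j = pis D t @ [D t] @ z" by (auto simp: prefix_def)
  have "pis D j = rev (pis D j)" using pis_pal[of j] by (simp add: is_pal_def)
  also have "\<dots> = rev z @ [D t] @ pis D t" using z pis_pal[of t] by (simp add: is_pal_def)
  finally have "suffix ([D j] @ pis D t @ [D j]) (pis D j @ [D j])"
    using assms(2) by (metis append.assoc suffixI)
  moreover have "is_pal ([D j] @ pis D t @ [D j])" using pis_pal[of t] by (simp add: is_pal_def)
  ultimately have up: "nn (Suc j) + (nn t + 2) \<le> 2 * (nn j + 1)"
    using rclos_le_suffix by fastforce
  have "2 * nn j \<le> nn (Suc j) + nn t"
  proof (cases "2 * nn j + 1 \<le> nn (Suc j)")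
    case True then show ?thesis by simp
  next
    case False
    then obtain t' where t': "t' < j" "D t' = D j" "nn (Suc j) + nn t' = 2 * nn j"
      using rec_low by blast
    have "t' \<le> t" using assms t' by (metis not_le)
    then have "nn t' \<le> nn t" using nn_mono by (metis strict_mono_less_eq)
    then show ?thesis using t' by simp
  qed
  then show ?thesis using up by simp
qed

lemma rec_new:
  assumes "\<forall>t<j. D t \<noteq> D j"
  shows "nn (Suc j) = 2 * nn j + 1"
proof -
  have "suffix [D j] (pis D j @ [D j])" by (simp add: suffix_def)
  moreover have "is_pal [D j]" by (simp add: is_pal_def)
  ultimately have "nn (Suc j) + 1 \<le> 2 * (nn j + 1)"
    using rclos_le_suffix by fastforce
  moreover have "2 * nn j + 1 \<le> nn (Suc j)" using rec_low[of j] assms by auto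
  ultimately show ?thesis by (simp del: pis.simps)
qed

end



lemma lastocc:
  fixes D :: "nat \<Rightarrow> 'a"
  assumes "t < j" "D t = x"
  shows "\<exists>k<j. D k = x \<and> t \<le> k \<and> (\<forall>s. k < s \<and> s < j \<longrightarrow> D s \<noteq> x)"
proof -
  let ?P = "\<lambda>k. k < j \<and> D k = x"
  have b: "\<forall>y. ?P y \<longrightarrow> y \<le> j" by auto
  have 1: "?P (Greatest ?P)" using GreatestI_nat[of ?P t j] assms b by blast
  have 2: "t \<le> Greatest ?P" using Greatest_le_nat[of ?P t j] assms b by blast
  have 3: "\<forall>s. Greatest ?P < s \<and> s < j \<longrightarrow> D s \<noteq> x"
    using Greatest_le_nat[of ?P _ j] b by (metis not_le)
  show ?thesis using 1 2 3 by blast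
qed

context epi begin

lemma nn_up: "nn (Suc j) \<le> 2 * nn j + 1"
proof -
  have "suffix [D j] (pis D j @ [D j])" by (simp add: suffix_def)
  moreover have "is_pal [D j]" by (simp add: is_pal_def)
  ultimately have "nn (Suc j) + 1 \<le> 2 * (nn j + 1)"
    using rclos_le_suffix by fastforce
  then show ?thesis by (simp del: pis.simps)
qed

lemma inv:
  "T \<subseteq> {..<j} \<Longrightarrow> (\<forall>t\<in>T. \<forall>s. t < s \<and> s < j \<longrightarrow> D s \<noteq> D t) \<Longrightarrow> (\<Sum>t\<in>T. nn t) \<le> nn j"
proof (induction j arbitrary: T)
  case 0 then show ?case by simp
next
  case (Suc j)
  show ?case
  proof (cases "j \<in> T")
    case False
    then have "T \<subseteq> {..<j}" using Suc.prems(1) by (auto simp: less_Suc_eq)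
    moreover have "\<forall>t\<in>T. \<forall>s. t < s \<and> s < j \<longrightarrow> D s \<noteq> D t" using Suc.prems(2) by auto
    ultimately have "(\<Sum>t\<in>T. nn t) \<le> nn j" using Suc.IH by blast
    also have "\<dots> \<le> nn (Suc j)" using nn_step[of j] by (simp del: pis.simps)
    finally show ?thesis .
  next
    case True
    define T' where "T' = T - {j}"
    have fin: "finite T" using Suc.prems(1) finite_subset by blast
    have sumT: "(\<Sum>t\<in>T. nn t) = nn j + (\<Sum>t\<in>T'. nn t)"
      using True fin T'_def by (simp add: sum.remove)
    have T'sub: "T' \<subseteq> {..<j}" using Suc.prems(1) T'_def by (auto simp: less_Suc_eq)
    have T'ne: "\<forall>t\<in>T'. D t \<noteq> D j" using Suc.prems(2) T'_def T'sub by fastforce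
    have T'p: "\<forall>t\<in>T'. \<forall>s. t < s \<and> s < j \<longrightarrow> D s \<noteq> D t" using Suc.prems(2) T'_def by auto
    show ?thesis
    proof (cases "\<exists>t<j. D t = D j")
      case True
      then obtain t0 where "t0 < j" "D t0 = D j" by blast
      then obtain k where k: "k < j" "D k = D j" "\<forall>s. k < s \<and> s < j \<longrightarrow> D s \<noteq> D j"
        using lastocc[where D=D, OF \<open>t0 < j\<close> \<open>D t0 = D j\<close>] by blast
      have kn: "k \<notin> T'" using T'ne k by auto
      have "insert k T' \<subseteq> {..<j}" using T'sub k by auto
      moreover have "\<forall>t\<in>insert k T'. \<forall>s. t < s \<and> s < j \<longrightarrow> D s \<noteq> D t" using T'p k by auto
      ultimately have "(\<Sum>t\<in>insert k T'. nn t) \<le> nn j" using Suc.IH by blast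
      then have "nn k + (\<Sum>t\<in>T'. nn t) \<le> nn j"
        using kn fin T'_def by simp
      moreover have "nn (Suc j) + nn k = 2 * nn j" using rec_old k by blast
      ultimately show ?thesis using sumT by (simp del: pis.simps)
    next
      case False
      then have "nn (Suc j) = 2 * nn j + 1" using rec_new by blast
      moreover have "(\<Sum>t\<in>T'. nn t) \<le> nn j" using Suc.IH T'sub T'p by blast
      ultimately show ?thesis using sumT by (simp del: pis.simps)
    qed
  qed
qed

lemma lru:
  assumes "k < i" "D k = D i" "\<forall>s. k < s \<and> s < i \<longrightarrow> D s \<noteq> D i"
    and "k < a" "a < i" "k < b" "b < i" "D a \<noteq> D b"
  shows "4 * nn k \<le> nn i + 1" "nn (Suc i) + nn k = 2 * nn i"
proof -
  show "nn (Suc i) + nn k = 2 * nn i" using rec_old[OF assms(1-3)] by simp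
  obtain a' where a': "a' < i" "D a' = D a" "a \<le> a'" "\<forall>s. a' < s \<and> s < i \<longrightarrow> D s \<noteq> D a"
    using lastocc[OF assms(5) refl] by blast
  obtain b' where b': "b' < i" "D b' = D b" "b \<le> b'" "\<forall>s. b' < s \<and> s < i \<longrightarrow> D s \<noteq> D b"
    using lastocc[OF assms(7) refl] by blast
  have ab: "a' \<noteq> b'" using a'(2) b'(2) assms(8) by metis
  have a4: "\<forall>s. a' < s \<and> s < i \<longrightarrow> D s \<noteq> D a'" using a'(2,4) by simp
  have b4: "\<forall>s. b' < s \<and> s < i \<longrightarrow> D s \<noteq> D b'" using b'(2,4) by simp
  have ka: "k < a'" using assms(4) a'(3) by linarith
  have kb: "k < b'" using assms(6) b'(3) by linarith
  obtain c where c: "c < i" "k < c" "c \<noteq> i - 1" "\<forall>s. c < s \<and> s < i \<longrightarrow> D s \<noteq> D c"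
  proof (cases "a' = i - 1")
    case True
    then have "b' \<noteq> i - 1" using ab by simp
    then show ?thesis using that[of b'] b'(1) kb b4 by blast
  next
    case False
    then show ?thesis using that[of a'] a'(1) ka a4 by blast
  qed
  define T where "T = {k, c, i - 1}"
  have pk: "\<forall>s. k < s \<and> s < i \<longrightarrow> D s \<noteq> D k" using assms(2,3) by simp
  have pi: "\<forall>s. i - 1 < s \<and> s < i \<longrightarrow> D s \<noteq> D (i - 1)" by auto
  have "T \<subseteq> {..<i}" using T_def c(1) assms(1) by auto
  moreover have "\<forall>t\<in>T. \<forall>s. t < s \<and> s < i \<longrightarrow> D s \<noteq> D t"
    unfolding T_def using pk pi c(4) by blast
  ultimately have "(\<Sum>t\<in>T. nn t) \<le> nn i" by (rule inv)
  moreover have "(\<Sum>t\<in>T. nn t) = nn k + nn c + nn (i - 1)"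
  proof -
    have "k \<noteq> c" "k \<noteq> i - 1" "c \<noteq> i - 1" using c by auto
    then show ?thesis using T_def by simp
  qed
  moreover have "nn k \<le> nn c" using strict_mono_less_eq[OF nn_mono] c(2) by simp
  moreover have "nn i \<le> 2 * nn (i - 1) + 1"
  proof -
    obtain i' where "i = Suc i'" using c(1) by (cases i) auto
    then show ?thesis using nn_up[of i'] by (simp del: pis.simps)
  qed
  ultimately show "4 * nn k \<le> nn i + 1" by (simp del: pis.simps)
qed

end



lemma enum_range:
  fixes f :: "nat \<Rightarrow> nat"
  assumes "strict_mono f"
  shows "enumerate (range f) n = f n"
proof (induction n)
  case 0
  have "(LEAST x. x \<in> range f) = f 0"
    by (rule Least_equality) (auto simp: strict_mono_less_eq[OF assms])
  then show ?case by (simp add: enumerate_0)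
next
  case (Suc n)
  have inf: "infinite (range f)"
    using assms finite_imageD infinite_UNIV_nat strict_mono_imp_inj_on by blast
  have "enumerate (range f) (Suc n) = (LEAST s. s \<in> range f \<and> f n < s)"
    using enumerate_Suc''[OF inf] Suc by simp
  also have "\<dots> = f (Suc n)"
  proof (rule Least_equality)
    show "f (Suc n) \<in> range f \<and> f n < f (Suc n)" using assms by (simp add: strict_mono_def)
    fix y assume "y \<in> range f \<and> f n < y"
    then obtain m where "y = f m" "f n < f m" by auto
    then have "n < m" using strict_mono_less[OF assms] by simp
    then show "f (Suc n) \<le> y" using \<open>y = f m\<close> strict_mono_less_eq[OF assms] by simp
  qed
  finally show ?case .
qed

lemma ratio_bound:
  fixes A B K :: nat
  assumes "4 * K \<le> A + 1" "B + K = 2 * A" "20 \<le> A"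
  shows "sqrt 3 \<le> real B / real A"
proof -
  have s: "sqrt 3 \<le> 1.7375"
    by (rule real_le_lsqrt) (auto simp: power2_eq_square)
  have "real B * 4 \<ge> 7 * real A - 1" using assms by linarith
  moreover have "1.7375 * real A \<le> (7 * real A - 1) / 4" using assms by simp
  ultimately have "1.7375 * real A \<le> real B" by (simp add: field_simps)
  moreover have "sqrt 3 * real A \<le> 1.7375 * real A"
    using s by (intro mult_right_mono) auto
  ultimately have "sqrt 3 * real A \<le> real B" by linarith
  then show ?thesis using assms by (simp add: field_simps)
qed

context epi begin

lemma pal_len_eq: "pal_len w = nn"
proof -
  have "pal_prefix_lengths w = range nn"
  proof
    show "pal_prefix_lengths w \<subseteq> range nn"
      using pal_prefix_is_pis by (auto simp: pal_prefix_lengths_def)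
    show "range nn \<subseteq> pal_prefix_lengths w"
    proof
      fix x assume "x \<in> range nn"
      then obtain t where "x = nn t" by auto
      then show "x \<in> pal_prefix_lengths w"
        using pis_pal[of t] pis_map[of t] by (simp add: pal_prefix_lengths_def)
    qed
  qed
  then show ?thesis unfolding pal_len_def using enum_range[OF nn_mono] by auto
qed

lemma delta_ge:
  assumes "\<forall>N. \<exists>i\<ge>N. sqrt 3 \<le> real (nn (Suc i)) / real (nn i)"
  shows "ereal (sqrt 3) \<le> delta_pal w"
proof -
  have "delta_pal w = (INF n. SUP m\<in>{n..}. ereal (real (nn (Suc m)) / real (nn m)))"
    unfolding delta_pal_def pal_len_eq by (rule limsup_INF_SUP)
  also have "ereal (sqrt 3) \<le> \<dots>"
  proof (rule INF_greatest)
    fix n :: nat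
    obtain i where "i \<ge> n" "sqrt 3 \<le> real (nn (Suc i)) / real (nn i)" using assms by blast
    then show "ereal (sqrt 3) \<le> (SUP m\<in>{n..}. ereal (real (nn (Suc m)) / real (nn m)))"
      by (intro SUP_upper2[of i]) auto
  qed
  finally show ?thesis .
qed

end



context epi begin

lemma core:
  assumes "l \<noteq> u" "l \<noteq> v" "u \<noteq> v" "t0 \<le> i" "D i = l" "oc < t0" "D oc = l"
   "\<forall>s. t0 \<le> s \<and> s < i \<longrightarrow> D s \<noteq> l" "t0 \<le> a" "a < i" "D a = u" "t0 \<le> b" "b < i" "D b = v"
   "20 \<le> t0"
  shows "sqrt 3 \<le> real (nn (Suc i)) / real (nn i)"
proof -
  have oi: "oc < i" using assms(6,4) by linarith
  obtain k where k: "k < i" "D k = l" "oc \<le> k" "\<forall>s. k < s \<and> s < i \<longrightarrow> D s \<noteq> l"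
    using lastocc[where D=D, OF oi assms(7)] by blast
  have kt: "k < t0"
  proof (rule ccontr)
    assume "\<not> k < t0"
    then have "t0 \<le> k" by simp
    then have "D k \<noteq> l" using assms(8) k(1) by blast
    then show False using k(2) by simp
  qed
  have r: "4 * nn k \<le> nn i + 1" "nn (Suc i) + nn k = 2 * nn i"
    using lru[of k i a b] k assms kt by auto
  have "20 \<le> nn i" using nn_ge[of i] assms(4,15) by linarith
  then show ?thesis using ratio_bound[OF r] by simp
qed

lemma helper:
  assumes "l \<noteq> u" "l \<noteq> v" "u \<noteq> v" "t0 < i" "oc < t0" "D oc = l" "20 \<le> t0"
    "\<exists>s. t0 \<le> s \<and> s \<le> i \<and> D s = l" "\<not> (\<exists>s. t0 \<le> s \<and> s \<le> i - 1 \<and> D s = l)"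
    "\<exists>s. t0 \<le> s \<and> s \<le> i \<and> D s = u" "\<exists>s. t0 \<le> s \<and> s \<le> i \<and> D s = v"
  shows "sqrt 3 \<le> real (nn (Suc i)) / real (nn i)"
proof -
  obtain s where s: "t0 \<le> s" "s \<le> i" "D s = l" using assms(8) by blast
  have "s = i"
  proof (rule ccontr)
    assume "s \<noteq> i" then have "s \<le> i - 1" using s(2) by simp
    then show False using assms(9) s by blast
  qed
  then have Di: "D i = l" using s by simp
  have nol: "\<forall>s. t0 \<le> s \<and> s < i \<longrightarrow> D s \<noteq> l"
  proof (intro allI impI)
    fix s assume "t0 \<le> s \<and> s < i"
    then have "t0 \<le> s" "s \<le> i - 1" by auto
    then show "D s \<noteq> l" using assms(9) by blast
  qed
  obtain a where a: "t0 \<le> a" "a \<le> i" "D a = u" using assms(10) by blast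
  have "a \<noteq> i" using a(3) Di assms(1) by auto
  then have a': "a < i" using a(2) by simp
  obtain b where b: "t0 \<le> b" "b \<le> i" "D b = v" using assms(11) by blast
  have "b \<noteq> i" using b(3) Di assms(2) by auto
  then have b': "b < i" using b(2) by simp
  show ?thesis
    using core[OF assms(1,2,3) _ Di assms(5,6) nol a(1) a' a(3) b(1) b' b(3) assms(7)] assms(4) by simp
qed

lemma three:
  assumes "x \<noteq> y" "x \<noteq> z" "y \<noteq> z"
    "\<exists>\<^sub>\<infinity>n. D n = x" "\<exists>\<^sub>\<infinity>n. D n = y" "\<exists>\<^sub>\<infinity>n. D n = z"
  shows "\<forall>N. \<exists>i\<ge>N. sqrt 3 \<le> real (nn (Suc i)) / real (nn i)"
proof
  fix N
  have ix: "\<forall>m. \<exists>n\<ge>m. D n = x" and iy: "\<forall>m. \<exists>n\<ge>m. D n = y" and iz: "\<forall>m. \<exists>n\<ge>m. D n = z"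
    using assms(4-6) by (auto simp: INFM_nat_le)
  obtain ox oy oz where o: "D ox = x" "D oy = y" "D oz = z" using ix iy iz by blast
  define t0 where "t0 = N + 20 + ox + oy + oz + 1"
  have to: "ox < t0" "oy < t0" "oz < t0" "20 \<le> t0" "N \<le> t0" using t0_def by auto
  define occ where "occ l i = (\<exists>s. t0 \<le> s \<and> s \<le> i \<and> D s = l)" for l i
  define P where "P i = (t0 \<le> i \<and> occ x i \<and> occ y i \<and> occ z i)" for i
  obtain fx where fx: "fx \<ge> t0" "D fx = x" using ix by blast
  obtain fy where fy: "fy \<ge> t0" "D fy = y" using iy by blast
  obtain fz where fz: "fz \<ge> t0" "D fz = z" using iz by blast
  have "P (fx + fy + fz)" unfolding P_def occ_def
  proof (intro conjI)
    show "t0 \<le> fx + fy + fz" using fx by simp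
    show "\<exists>s. t0 \<le> s \<and> s \<le> fx + fy + fz \<and> D s = x" using fx by (intro exI[of _ fx]) simp
    show "\<exists>s. t0 \<le> s \<and> s \<le> fx + fy + fz \<and> D s = y" using fy by (intro exI[of _ fy]) simp
    show "\<exists>s. t0 \<le> s \<and> s \<le> fx + fy + fz \<and> D s = z" using fz by (intro exI[of _ fz]) simp
  qed
  then have Pi: "P (Least P)" by (rule LeastI)
  define i where "i = Least P"
  have Pi': "t0 \<le> i" "occ x i" "occ y i" "occ z i" using Pi i_def P_def by auto
  have "i \<noteq> t0"
  proof
    assume "i = t0"
    then have "D t0 = x" "D t0 = y" using Pi' unfolding occ_def by auto
    then show False using assms(1) by simp
  qed
  then have ti: "t0 < i" using Pi' by simp
  have "\<not> P (i - 1)" using ti i_def not_less_Least[of "i - 1" P] by simp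
  then have "\<not> occ x (i - 1) \<or> \<not> occ y (i - 1) \<or> \<not> occ z (i - 1)"
    using ti P_def by simp
  then have "sqrt 3 \<le> real (nn (Suc i)) / real (nn i)"
  proof (elim disjE)
    assume "\<not> occ x (i - 1)"
    then show ?thesis using helper[of x y z t0 i ox] assms(1-3) ti to o Pi' unfolding occ_def by blast
  next
    assume "\<not> occ y (i - 1)"
    then show ?thesis using helper[of y x z t0 i oy] assms(1-3) ti to o Pi' unfolding occ_def by blast
  next
    assume "\<not> occ z (i - 1)"
    then show ?thesis using helper[of z x y t0 i oz] assms(1-3) ti to o Pi' unfolding occ_def by blast
  qed
  then show "\<exists>i\<ge>N. sqrt 3 \<le> real (nn (Suc i)) / real (nn i)" using ti to by (intro exI[of _ i]) auto
qed

end



lemma pal_ext: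
  assumes "is_pal p" "is_pal u" "prefix u p" "length p \<le> 2 * length u"
  shows "drop (length u) p = drop (2 * length u - length p) u"
proof -
  obtain y where py: "p = u @ y" using assms(3) by (auto simp: prefix_def)
  have "p = rev p" using assms(1) by (simp add: is_pal_def)
  also have "\<dots> = rev y @ u" using py assms(2) by (simp add: is_pal_def)
  finally have p2: "p = rev y @ u" .
  have ly: "length y \<le> length u" using py assms(4) by simp
  have "drop (length u) p = y" using py by simp
  moreover have "drop (length u) p = drop (length u - length y) u"
    using p2 ly by simp
  moreover have "2 * length u - length p = length u - length y" using py by simp
  ultimately show ?thesis by simp
qed

context epi begin

definition V :: "nat \<Rightarrow> 'a list" where "V j = drop (nn j) (pis D (Suc j))"

lemma pis_V: "pis D (Suc j) = pis D j @ V j"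
proof -
  obtain z where z: "pis D (Suc j) = (pis D j @ [D j]) @ z"
    using pis_step_prefix[of j] by (auto simp: prefix_def)
  show ?thesis unfolding V_def by (subst (1 2) z) simp
qed

lemma rev_V_prefix: "rev (V j) = map w [0..<length (V j)]"
proof -
  have "pis D (Suc j) = rev (pis D (Suc j))" using pis_pal[of "Suc j"] by (simp add: is_pal_def)
  also have "\<dots> = rev (V j) @ rev (pis D j)" using pis_V[of j] by simp
  finally have "prefix (rev (V j)) (pis D (Suc j))" by (metis prefixI)
  then show ?thesis using prefix_w by fastforce
qed

lemma pis_concat: "t \<le> j \<Longrightarrow> pis D j = pis D t @ concat (map V [t..<j])"
proof (induction j rule: dec_induct)
  case base then show ?case by simp
next
  case (step j) then show ?case using pis_V[of j] by simp
qed

lemma V_old: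
  assumes "t < j" "D t = D j" "\<forall>s. t < s \<and> s < j \<longrightarrow> D s \<noteq> D j"
  shows "V j = concat (map V [t..<j])"
proof -
  have r: "nn (Suc j) + nn t = 2 * nn j" using rec_old[OF assms] .
  have pr: "prefix (pis D j) (pis D (Suc j))" using pis_V[of j] by simp
  have "V j = drop (2 * nn j - nn (Suc j)) (pis D j)"
    unfolding V_def using pal_ext[OF pis_pal pis_pal pr] r by simp
  also have "2 * nn j - nn (Suc j) = nn t" using r by simp
  also have "drop (nn t) (pis D j) = concat (map V [t..<j])"
    using pis_concat[of t j] assms(1) by simp
  finally show ?thesis .
qed

lemma V_new:
  assumes "\<forall>t<j. D t \<noteq> D j"
  shows "V j = [D j] @ pis D j"
proof -
  have r: "nn (Suc j) = 2 * nn j + 1" using rec_new[OF assms] .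
  obtain y where y: "pis D (Suc j) = (pis D j @ [D j]) @ y"
    using pis_step_prefix[of j] by (auto simp: prefix_def)
  have "pis D (Suc j) = rev (pis D (Suc j))" using pis_pal[of "Suc j"] by (simp add: is_pal_def)
  also have "\<dots> = rev y @ [D j] @ pis D j" using y pis_pal[of j] by (simp add: is_pal_def)
  finally have y2: "pis D (Suc j) = rev y @ [D j] @ pis D j" .
  have ly: "length y = nn j" using y r by simp
  have "y = drop (Suc (nn j)) (pis D (Suc j))" using y by simp
  also have "\<dots> = pis D j" using y2 ly by simp
  finally have "y = pis D j" .
  then show ?thesis using y unfolding V_def by simp
qed

lemma V_same: "D (Suc j) = D j \<Longrightarrow> V (Suc j) = V j"
proof -
  assume "D (Suc j) = D j"
  moreover have "\<forall>s. j < s \<and> s < Suc j \<longrightarrow> D s \<noteq> D (Suc j)" by auto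
  ultimately show ?thesis using V_old[of j "Suc j"] by simp
qed

end



primrec cpt :: "(nat \<Rightarrow> 'a) \<Rightarrow> nat \<Rightarrow> nat" where
  "cpt D 0 = 0"
| "cpt D (Suc m) = (LEAST j. cpt D m < j \<and> D j \<noteq> D (cpt D m))"

context epi begin

lemma sturm:
  assumes ab: "a \<noteq> b" "\<forall>n. D n \<in> {a, b}" "D 0 = a"
    and ia: "\<forall>m. \<exists>n\<ge>m. D n = a" and ib: "\<forall>m. \<exists>n\<ge>m. D n = b"
  shows "char_sturmian a b w"
proof -
  define c where "c = cpt D"
  have c_ex: "\<exists>j. c m < j \<and> D j \<noteq> D (c m)" for m
  proof (cases "D (c m) = a")
    case True
    obtain n where "n \<ge> Suc (c m)" "D n = b" using ib by blast
    then show ?thesis using True ab(1) by (intro exI[of _ n]) auto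
  next
    case False
    obtain n where "n \<ge> Suc (c m)" "D n = a" using ia by blast
    then show ?thesis using False by (intro exI[of _ n]) auto
  qed
  have c_step: "c m < c (Suc m) \<and> D (c (Suc m)) \<noteq> D (c m)" for m
    unfolding c_def cpt.simps using c_ex[of m] unfolding c_def by (rule LeastI_ex)
  have c_const: "D j = D (c m)" if "c m \<le> j" "j < c (Suc m)" for j m
  proof (cases "j = c m")
    case False
    then have "c m < j" using that by simp
    moreover have "\<not> (c m < j \<and> D j \<noteq> D (c m))"
      using not_less_Least[of j "\<lambda>j. c m < j \<and> D j \<noteq> D (c m)"] that(2)
      unfolding c_def cpt.simps by blast
    ultimately show ?thesis by blast
  qed simp
  have c_alt: "D (c m) = (if even m then a else b)" for m
  proof (induction m)
    case 0 then show ?case using ab(3) by (simp add: c_def)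
  next
    case (Suc m)
    have "D (c (Suc m)) \<in> {a, b}" using ab(2) by blast
    then show ?case using Suc c_step[of m] by auto
  qed
  have c_mono: "strict_mono c" unfolding strict_mono_Suc_iff using c_step by blast
  have V_const: "V j = V (c m)" if "c m \<le> j" "j < c (Suc m)" for j m
    using that
  proof (induction j rule: dec_induct)
    case base then show ?case by simp
  next
    case (step j)
    have "D (Suc j) = D (c m)" using step c_const by simp
    moreover have "D j = D (c m)" using step c_const by simp
    ultimately show ?case using V_same[of j] step by simp
  qed
  define s where "s i = (if i = 1 then c 1 + 1 else c i - c (i - 1))" for i
  have s_pos: "\<forall>i\<ge>1. s i \<ge> 1"
  proof (intro allI impI)
    fix i :: nat assume "1 \<le> i"
    show "1 \<le> s i"
    proof (cases "i = 1")
      case False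
      then obtain i' where "i = Suc i'" using \<open>1 \<le> i\<close> by (cases i) auto
      then show ?thesis using c_step[of i'] False by (auto simp: s_def)
    qed (simp add: s_def)
  qed
  have main: "sigma a b s m = rev (V (c m)) \<and> sigma a b s (Suc m) = rev (V (c (Suc m)))" for m
  proof (induction m)
    case 0
    have v0: "V (c 0) = [a]" using V_new[of 0] ab(3) by (simp add: c_def)
    have c1: "D (c 1) = b" using c_alt[of 1] by simp
    have nw: "\<forall>t<c 1. D t \<noteq> D (c 1)"
    proof (intro allI impI)
      fix t assume "t < c 1"
      then have "D t = D (c 0)" using c_const[of 0 t] by (simp add: c_def)
      then show "D t \<noteq> D (c 1)" using c_step[of 0] by auto
    qed
    have "pis D (c 1) = pis D 0 @ concat (map V [0..<c 1])" using pis_concat[of 0 "c 1"] by simp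
    also have "map V [0..<c 1] = map (\<lambda>_. [a]) [0..<c 1]"
    proof (rule map_cong)
      fix x assume "x \<in> set [0..<c 1]"
      then show "V x = [a]" using V_const[of 0 x] v0 by (simp add: c_def)
    qed simp
    finally have pc1: "pis D (c 1) = replicate (c 1) a" by (simp add: map_replicate_const)
    have "V (c 1) = [b] @ replicate (c 1) a" using V_new[OF nw] c1 pc1 by simp
    then show ?case using v0 by (simp add: s_def c_def)
  next
    case (Suc m)
    let ?t = "c (Suc m) - 1"
    have cm: "c m < c (Suc m)" "c (Suc m) < c (Suc (Suc m))" using c_step by auto
    have tlt: "?t < c (Suc (Suc m))" using cm by simp
    have Dt: "D ?t = D (c m)" using c_const[of m ?t] cm by simp
    have Dt2: "D ?t = D (c (Suc (Suc m)))" using Dt c_alt[of m] c_alt[of "Suc (Suc m)"] by simp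
    have btw: "\<forall>x. ?t < x \<and> x < c (Suc (Suc m)) \<longrightarrow> D x \<noteq> D (c (Suc (Suc m)))"
    proof (intro allI impI)
      fix x assume "?t < x \<and> x < c (Suc (Suc m))"
      then have "c (Suc m) \<le> x" "x < c (Suc (Suc m))" by auto
      then have "D x = D (c (Suc m))" using c_const by blast
      then show "D x \<noteq> D (c (Suc (Suc m)))" using c_step[of "Suc m"] by auto
    qed
    have e1: "V (c (Suc (Suc m))) = concat (map V [?t..<c (Suc (Suc m))])"
      using V_old[OF tlt Dt2 btw] .
    have e2: "[?t..<c (Suc (Suc m))] = ?t # [c (Suc m)..<c (Suc (Suc m))]"
      using cm by (simp add: upt_conv_Cons)
    have e3: "map V [c (Suc m)..<c (Suc (Suc m))] = map (\<lambda>_. V (c (Suc m))) [c (Suc m)..<c (Suc (Suc m))]"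
    proof (rule map_cong)
      fix x assume "x \<in> set [c (Suc m)..<c (Suc (Suc m))]"
      then show "V x = V (c (Suc m))" using V_const[of "Suc m" x] by simp
    qed simp
    have e4: "V ?t = V (c m)" using V_const[of m ?t] cm by simp
    have VV: "V (c (Suc (Suc m))) = V (c m) @ concat (replicate (c (Suc (Suc m)) - c (Suc m)) (V (c (Suc m))))"
      using e1 e2 e3 e4 by (simp add: map_replicate_const del: upt_Suc)
    have "sigma a b s (Suc (Suc m)) = concat (replicate (s (Suc (Suc m))) (sigma a b s (Suc m))) @ sigma a b s m"
      by simp
    also have "\<dots> = rev (V (c (Suc (Suc m))))"
    proof -
      have s2: "s (Suc (Suc m)) = c (Suc (Suc m)) - c (Suc m)" by (simp add: s_def)
      show ?thesis using Suc.IH VV s2 by (simp add: rev_concat)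
    qed
    finally show ?case using Suc.IH by simp
  qed
  have "iprefix (sigma a b s n) w" for n
    using main[of n] rev_V_prefix[of "c n"] by (simp add: iprefix_def)
  then show ?thesis unfolding char_sturmian_def using ab(1) s_pos by blast
qed

end



context epi begin

lemma const_periodic:
  assumes "\<forall>n. D n = a"
  shows "periodic_word w"
proof -
  have s: "nn (Suc j) = Suc (nn j)" for j
  proof (induction j)
    case 0 then show ?case using rec_new[of 0] by simp
  next
    case (Suc j)
    have "\<forall>s. j < s \<and> s < Suc j \<longrightarrow> D s \<noteq> D (Suc j)" by auto
    then have "nn (Suc (Suc j)) + nn j = 2 * nn (Suc j)"
      using rec_old[of j "Suc j"] assms by simp
    then show ?case using Suc.IH by (simp del: pis.simps)
  qed
  have nj: "nn j = j" for j
  proof (induction j)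
    case (Suc j) then show ?case using s[of j] by (simp del: pis.simps)
  qed simp
  have "w j = a" for j using w_at[of j] nj[of j] assms by simp
  then show ?thesis unfolding periodic_word_def by (intro exI[of _ 1]) simp
qed

end

theorem corollary7p4:
  fixes A :: "'a set" and w :: "nat \<Rightarrow> 'a"
  assumes "strict_std_epi A w"
    and "\<not> periodic_word w"
    and "delta_pal w < ereal (sqrt 3)"
  shows "card A = 2 \<and> (\<exists>a b. A = {a, b} \<and> char_sturmian a b w)"
proof -
  obtain D where DA: "\<forall>n. D n \<in> A" and Dinf: "\<forall>a\<in>A. \<exists>\<^sub>\<infinity>n. D n = a" and Dstd: "std_epi_dir D w"
    using assms(1) unfolding strict_std_epi_def by blast
  interpret epi D w using Dstd by unfold_locales
  have no3: "\<not> (x \<noteq> y \<and> x \<noteq> z \<and> y \<noteq> z)" if "x \<in> A" "y \<in> A" "z \<in> A" for x y z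
  proof
    assume d: "x \<noteq> y \<and> x \<noteq> z \<and> y \<noteq> z"
    have "ereal (sqrt 3) \<le> delta_pal w"
      using delta_ge three[of x y z] d Dinf that by blast
    then show False using assms(3) by simp
  qed
  define a where "a = D 0"
  have aA: "a \<in> A" using DA a_def by simp
  obtain b where bA: "b \<in> A" and ba: "b \<noteq> a"
  proof (cases "\<exists>b\<in>A. b \<noteq> a")
    case True then show ?thesis using that by blast
  next
    case False
    then have "\<forall>n. D n = a" using DA by blast
    then have "periodic_word w" by (rule const_periodic)
    then show ?thesis using assms(2) by simp
  qed
  have Aeq: "A = {a, b}" using no3 aA bA ba by blast
  have card: "card A = 2" using Aeq ba by simp
  have "char_sturmian a b w"
  proof (rule sturm)
    show "a \<noteq> b" using ba by simp
    show "\<forall>n. D n \<in> {a, b}" using DA Aeq by simp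
    show "D 0 = a" using a_def by simp
    show "\<forall>m. \<exists>n\<ge>m. D n = a" using Dinf aA by (simp add: INFM_nat_le)
    show "\<forall>m. \<exists>n\<ge>m. D n = b" using Dinf bA by (simp add: INFM_nat_le)
  qed
  then show ?thesis using card Aeq by blast
qed



end
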